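(* Let $\Delta\subset\mathbb{S}^2$ be a planar flag complex and let $(\Delta_1,\Delta_2)$ be a strong visual decomposition of $\Delta$ along an induced 4-cycle $\sigma$. If $R$ is a region (connected component) of $\mathbb{S}^2-\Delta$, then $R$ is a region of $\mathbb{S}^2-\Delta_1$ or a region of $\mathbb{S}^2-\Delta_2$.
   Context: A flag complex is a simplicial complex in which every complete subgraph of the 1-skeleton spans a simplex. For $\Delta\subset\mathbb{S}^2$, an induced 4-cycle $\sigma$ strongly separates $\Delta$ if $\Delta$ meets both components $U_1,U_2$ of $\mathbb{S}^2-\sigma$. In that case, letting $\Delta_i$ be $\sigma$ together with the components of $\Delta-\sigma$ lying in $U_i$, one has $\Delta=\Delta_1\cup\Delta_2$ and $\Delta_1\cap\Delta_2=\sigma$; the pair $(\Delta_1,\Delta_2)$ is called the strong visual decomposition of $\Delta$ along $\sigma$. *)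

theory Defs
  imports "HOL-Analysis.Analysis"
begin

definition simplicial_complex :: "'v set set \<Rightarrow> bool" where
  "simplicial_complex K \<longleftrightarrow> finite K \<and>
     (\<forall>s\<in>K. finite s \<and> s \<noteq> {}) \<and>
     (\<forall>s\<in>K. \<forall>t. t \<subseteq> s \<and> t \<noteq> {} \<longrightarrow> t \<in> K)"

definition vertices :: "'v set set \<Rightarrow> 'v set" where
  "vertices K = \<Union>K"

definition flag_complex :: "'v set set \<Rightarrow> bool" where
  "flag_complex K \<longleftrightarrow> simplicial_complex K \<and>
     (\<forall>S. S \<subseteq> vertices K \<and> S \<noteq> {} \<and>
          (\<forall>u\<in>S. \<forall>v\<in>S. u \<noteq> v \<longrightarrow> {u, v} \<in> K) \<longrightarrow> S \<in> K)"

text \<open>Standard geometric realization, as barycentric coordinate functions.\<close>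
definition realization :: "'v set set \<Rightarrow> ('v \<Rightarrow> real) set" where
  "realization K = (\<Union>s\<in>K. {f. (\<forall>v. 0 \<le> f v) \<and> (\<forall>v. v \<notin> s \<longrightarrow> f v = 0) \<and> sum f s = 1})"

definition full_subcomplex :: "'v set set \<Rightarrow> 'v set \<Rightarrow> 'v set set" where
  "full_subcomplex K W = {s \<in> K. s \<subseteq> W}"

definition induced_4cycle :: "'v set set \<Rightarrow> 'v \<Rightarrow> 'v \<Rightarrow> 'v \<Rightarrow> 'v \<Rightarrow> bool" where
  "induced_4cycle K a b c d \<longleftrightarrow> distinct [a, b, c, d] \<and>
     {a, b} \<in> K \<and> {b, c} \<in> K \<and> {c, d} \<in> K \<and> {d, a} \<in> K \<and>
     {a, c} \<notin> K \<and> {b, d} \<notin> K"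

abbreviation S2 :: "(real^3) set" where
  "S2 \<equiv> sphere 0 1"

definition planar_embedding :: "'v set set \<Rightarrow> (('v \<Rightarrow> real) \<Rightarrow> real^3) \<Rightarrow> bool" where
  "planar_embedding K e \<longleftrightarrow> continuous_on (realization K) e \<and>
     inj_on e (realization K) \<and> e ` realization K \<subseteq> S2"

text \<open>The piece Delta_i of the strong visual decomposition: sigma together with the
  components of Delta - sigma lying in U.\<close>
definition visual_piece :: "(real^3) set \<Rightarrow> (real^3) set \<Rightarrow> (real^3) set \<Rightarrow> (real^3) set" where
  "visual_piece D \<sigma> U = \<sigma> \<union> \<Union>{C. C \<in> components (D - \<sigma>) \<and> C \<subseteq> U}"

end

theory Submission
  imports Defs
begin

lemma diff_sub_aux: "R \<subseteq> S - D \<Longrightarrow> s \<subseteq> D \<Longrightarrow> R \<subseteq> S - s"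
  by blast

lemma key:
  fixes S D \<sigma> U R :: "(real^3) set"
  assumes sD: "\<sigma> \<subseteq> D" and DS: "D \<subseteq> S"
    and U: "U \<in> components (S - \<sigma>)"
    and R: "R \<in> components (S - D)" and RU: "R \<subseteq> U"
  shows "R \<in> components (S - visual_piece D \<sigma> U)"
proof -
  let ?D1 = "visual_piece D \<sigma> U"
  have D1D: "?D1 \<subseteq> D" unfolding visual_piece_def using sD
    by (auto dest: in_components_subset)
  have Rne: "R \<noteq> {}" and RS: "R \<subseteq> S - D" and Rc: "connected R"
    using R by (auto simp: in_components_nonempty in_components_subset in_components_connected)
  show ?thesis
  proof (subst in_components_maximal, intro conjI allI impI)
    show "R \<noteq> {}" "connected R" by fact+
    show "R \<subseteq> S - ?D1" using RS D1D by blast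
    fix d assume H: "d \<noteq> {} \<and> R \<subseteq> d \<and> d \<subseteq> S - ?D1 \<and> connected d"
    have "\<sigma> \<subseteq> ?D1" unfolding visual_piece_def by blast
    hence dS: "d \<subseteq> S - \<sigma>" using H by blast
    have dU: "d \<subseteq> U" using components_maximal[OF U _ dS] H Rne RU by blast
    have "d \<inter> D = {}"
    proof (rule ccontr)
      assume "d \<inter> D \<noteq> {}"
      then obtain y where y: "y \<in> d" "y \<in> D" by blast
      have "y \<notin> \<sigma>" using y dS by blast
      let ?C = "connected_component_set (D - \<sigma>) y"
      have C: "?C \<in> components (D - \<sigma>)" using y \<open>y \<notin> \<sigma>\<close>
        by (intro componentsI) blast
      have "?C \<subseteq> S - \<sigma>" using DS connected_component_subset by blast
      moreover have "y \<in> ?C" using y \<open>y \<notin> \<sigma>\<close> by simp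
      ultimately have "?C \<subseteq> U" using components_maximal[OF U] y dU by blast
      hence "y \<in> \<Union>{C. C \<in> components (D - \<sigma>) \<and> C \<subseteq> U}" using C \<open>y \<in> ?C\<close> by blast
      hence "y \<in> ?D1" unfolding visual_piece_def by blast
      thus False using H y by blast
    qed
    hence "d \<subseteq> S - D" using H by blast
    moreover have "connected d" using H by blast
    moreover have "R \<inter> d \<noteq> {}" using H Rne by blast
    ultimately have "d \<subseteq> R" using components_maximal[OF R] by blast
    thus "d = R" using H by blast
  qed
qed

theorem lemma4p14:
  fixes K :: "'v set set" and e :: "('v \<Rightarrow> real) \<Rightarrow> real^3"
    and a b c d :: 'v and U1 U2 R :: "(real^3) set"
  assumes "flag_complex K"
    and "planar_embedding K e"
    and "induced_4cycle K a b c d"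
    and "components (S2 - e ` realization (full_subcomplex K {a, b, c, d})) = {U1, U2}"
    and "U1 \<noteq> U2"
    and "e ` realization K \<inter> U1 \<noteq> {}"
    and "e ` realization K \<inter> U2 \<noteq> {}"
    and "R \<in> components (S2 - e ` realization K)"
  shows "R \<in> components (S2 - visual_piece (e ` realization K)
                               (e ` realization (full_subcomplex K {a, b, c, d})) U1)
       \<or> R \<in> components (S2 - visual_piece (e ` realization K)
                               (e ` realization (full_subcomplex K {a, b, c, d})) U2)"
proof -
  let ?D = "e ` realization K" and ?s = "e ` realization (full_subcomplex K {a, b, c, d})"
  have "realization (full_subcomplex K {a, b, c, d}) \<subseteq> realization K"
    unfolding realization_def full_subcomplex_def by auto
  hence sD: "?s \<subseteq> ?D" by (rule image_mono)
  have DS: "?D \<subseteq> S2" using assms(2) by (simp add: planar_embedding_def)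
  have Rne: "R \<noteq> {}" by (rule in_components_nonempty[OF assms(8)])
  have RS: "R \<subseteq> S2 - ?D" by (rule in_components_subset[OF assms(8)])
  have Rc: "connected R" by (rule in_components_connected[OF assms(8)])
  obtain x where x: "x \<in> R" using Rne by blast
  let ?C = "connected_component_set (S2 - ?s) x"
  have RS': "R \<subseteq> S2 - ?s" using RS sD by (rule diff_sub_aux)
  have xs: "x \<in> S2 - ?s" using x RS' by (rule subsetD[rotated])
  have C: "?C \<in> components (S2 - ?s)" by (rule componentsI[OF xs])
  have RC: "R \<subseteq> ?C" by (rule connected_component_maximal[OF x Rc RS'])
  have R1: "R \<in> components (S2 - visual_piece ?D ?s ?C)"
    by (rule key[OF sD DS C assms(8) RC])
  have "?C \<in> {U1, U2}" using assms(4) C by (rule subst)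
  hence "?C = U1 \<or> ?C = U2" by simp
  thus ?thesis
  proof
    assume h: "?C = U1"
    show ?thesis using R1 unfolding h by (rule disjI1)
  next
    assume h: "?C = U2"
    show ?thesis using R1 unfolding h by (rule disjI2)
  qed
qed

end
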